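(* Let $k \geq 2$ be an integer. For integers $d, i, u$ with $1 \le d \le k$ and $0 \le u \le k$, let $$D(d,i,u) = \frac{\binom{u}{i}\binom{k-u}{d-i}}{\binom{k}{d}},$$ with the convention that a binomial coefficient $\binom{n}{m}$ is $0$ when $m<0$ or $m>n$. Then for all integers $d$ with $1 \le d \le k-1$ and all $u$ with $0 \le u \le k$ and $u \le \frac{k+1}{d+1}$, we have $$D(d+1,i,u) \ge D(d,i,u) \quad \text{for every integer } i > 0 .$$ In words, the utility degree distribution of degree $d+1$ dominates that of degree $d$ on all nonzero utility degrees.
   Context: Setting: LT codes with $k$ input symbols. An output symbol of degree $d$ is the XOR of $d$ distinct input symbols (its neighbors) chosen uniformly at random. At some moment of decoding, $u$ input symbols are still unsolved. The utility degree of a received output symbol is the number of its neighbors that are still unsolved. Thus $D(d,i,u)$ is the probability that an output symbol of degree $d$ has utility degree $i$ when $u$ input symbols are unsolved (a hypergeometric distribution, nonzero only for $\max(0,d-k+u) \le i \le \min(d,u)$). *)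

theory Defs
  imports Complex_Main
begin

definition ibinom :: "int \<Rightarrow> int \<Rightarrow> real" where
  "ibinom n m = (if m < 0 \<or> m > n \<or> n < 0 then 0 else real (nat n choose nat m))"

definition Dutil :: "int \<Rightarrow> int \<Rightarrow> int \<Rightarrow> int \<Rightarrow> real" where
  "Dutil k d i u = ibinom u i * ibinom (k - u) (d - i) / ibinom k d"

end

theory Submission
  imports Defs
begin

lemma ibinom_nat: "n \<ge> 0 \<Longrightarrow> m \<ge> 0 \<Longrightarrow> ibinom n m = real (nat n choose nat m)"
  unfolding ibinom_def by (auto simp: binomial_eq_0)

lemma ibinom_nonneg: "ibinom n m \<ge> 0"
  unfolding ibinom_def by auto

lemma choose_step: "Suc b * (a choose Suc b) = (a - b) * (a choose b)"
  by (metis binomial_absorb_comp binomial_absorption)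

theorem mainTheorem1:
  fixes k d u i :: int
  assumes "k \<ge> 2"
    and "1 \<le> d" and "d \<le> k - 1"
    and "0 \<le> u" and "u \<le> k"
    and "real_of_int u \<le> real_of_int (k + 1) / real_of_int (d + 1)"
    and "i > 0"
  shows "Dutil k (d + 1) i u \<ge> Dutil k d i u"
proof (cases "i \<le> d")
  case False
  hence "ibinom (k - u) (d - i) = 0" unfolding ibinom_def by auto
  thus ?thesis unfolding Dutil_def using ibinom_nonneg
    by (simp add: divide_nonneg_nonneg mult_nonneg_nonneg)
next
  case True
  have key: "u * (d + 1) \<le> k + 1"
  proof -
    have "real_of_int u * real_of_int (d + 1) \<le> real_of_int (k + 1)"
      using assms(2,6) by (simp add: pos_le_divide_eq)
    thus ?thesis by (metis of_int_le_iff of_int_mult)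
  qed
  have key2: "i * (k + 1) \<ge> k + 1" using assms by simp
  define a where "a = nat (k - u)"
  define b where "b = nat (d - i)"
  define K where "K = nat k"
  define e where "e = nat d"
  have A0: "ibinom (k - u) (d - i) = real (a choose b)"
    using True assms by (simp add: ibinom_nat a_def b_def)
  have A1: "ibinom (k - u) (d + 1 - i) = real (a choose Suc b)"
  proof -
    have "nat (d + 1 - i) = Suc b" using True unfolding b_def by simp
    thus ?thesis using True assms ibinom_nat[of "k-u" "d+1-i"] unfolding a_def by simp
  qed
  have B0: "ibinom k d = real (K choose e)"
    using assms by (simp add: ibinom_nat K_def e_def)
  have B1: "ibinom k (d + 1) = real (K choose Suc e)"
  proof -
    have "nat (d + 1) = Suc e" using assms unfolding e_def by simp
    thus ?thesis using assms ibinom_nat[of k "d+1"] unfolding K_def by simp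
  qed
  have eK: "e < K" using assms unfolding K_def e_def by simp
  have B0p: "real (K choose e) > 0" using eK by simp
  have B1p: "real (K choose Suc e) > 0" using eK by simp
  have s1: "real (Suc b) * real (a choose Suc b) = real (a - b) * real (a choose b)"
    using choose_step[of b a] by (metis of_nat_mult)
  have s2: "real (Suc e) * real (K choose Suc e) = real (K - e) * real (K choose e)"
    using choose_step[of e K] by (metis of_nat_mult)
  have main: "real (a choose b) * real (K choose Suc e) \<le> real (a choose Suc b) * real (K choose e)"
  proof (cases "b \<le> a")
    case False
    thus ?thesis by (simp add: binomial_eq_0)
  next
    case ba: True
    have ineq: "real (Suc b) * real (K - e) \<le> real (a - b) * real (Suc e)"
    proof -
      have i1: "int (a - b) = k - u - d + i" using ba True assms unfolding a_def b_def by simp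
      have i2: "int (K - e) = k - d" using eK assms unfolding K_def e_def by simp
      have i3: "int (Suc b) = d - i + 1" using True unfolding b_def by simp
      have i4: "int (Suc e) = d + 1" using assms unfolding e_def by simp
      have id: "(k - u - d + i) * (d + 1) - (d - i + 1) * (k - d) = i * (k + 1) - u * (d + 1)"
        by (simp add: algebra_simps)
      have "(d - i + 1) * (k - d) \<le> (k - u - d + i) * (d + 1)"
        using id key key2 by linarith
      hence "int (Suc b) * int (K - e) \<le> int (a - b) * int (Suc e)"
        unfolding i1 i2 i3 i4 .
      hence "Suc b * (K - e) \<le> (a - b) * Suc e"
        by (simp only: of_nat_mult[symmetric] of_nat_le_iff)
      hence "real (Suc b * (K - e)) \<le> real ((a - b) * Suc e)"
        by (simp only: of_nat_le_iff)
      thus ?thesis by (simp only: of_nat_mult)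
    qed
    have "real (Suc b) * real (Suc e) * (real (a choose b) * real (K choose Suc e))
        = real (Suc b) * real (a choose b) * (real (Suc e) * real (K choose Suc e))"
      by (simp only: mult_ac)
    also have "\<dots> = real (Suc b) * real (a choose b) * (real (K - e) * real (K choose e))"
      by (simp only: s2)
    also have "\<dots> = real (Suc b) * real (K - e) * (real (a choose b) * real (K choose e))"
      by (simp only: mult_ac)
    also have "\<dots> \<le> real (a - b) * real (Suc e) * (real (a choose b) * real (K choose e))"
      by (rule mult_right_mono[OF ineq]) simp
    also have "\<dots> = (real (a - b) * real (a choose b)) * real (Suc e) * real (K choose e)"
      by (simp only: mult_ac)
    also have "\<dots> = (real (Suc b) * real (a choose Suc b)) * real (Suc e) * real (K choose e)"
      by (simp only: s1)
    also have "\<dots> = real (Suc b) * real (Suc e) * (real (a choose Suc b) * real (K choose e))"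
      by (simp only: mult_ac)
    finally have "real (Suc b) * real (Suc e) * (real (a choose b) * real (K choose Suc e))
        \<le> real (Suc b) * real (Suc e) * (real (a choose Suc b) * real (K choose e))" .
    moreover have "real (Suc b) * real (Suc e) > 0" by (simp del: of_nat_Suc)
    ultimately show ?thesis by (rule mult_le_cancel_left_pos[THEN iffD1, rotated])
  qed
  have "ibinom (k - u) (d - i) / ibinom k d \<le> ibinom (k - u) (d + 1 - i) / ibinom k (d + 1)"
    unfolding A0 A1 B0 B1 using main B0p B1p by (simp add: divide_le_eq le_divide_eq mult.commute mult.left_commute)
  hence "ibinom u i * (ibinom (k - u) (d - i) / ibinom k d) \<le> ibinom u i * (ibinom (k - u) (d + 1 - i) / ibinom k (d + 1))"
    using ibinom_nonneg by (rule mult_left_mono)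
  thus ?thesis unfolding Dutil_def by (simp add: algebra_simps)
qed

end
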